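(* Let $L$ be a finite graded lattice of rank $n$. Then $L$ is supersolvable if and only if $L$ admits an $S_n$ EL-labeling.
   Context: For a finite graded poset $P$ of rank $n$ with least element $\hat0$ and greatest element $\hat1$, let $\mathcal{E}(P)=\{(s,t): t \text{ covers } s\}$ be the set of edges of its Hasse diagram. An edge-labeling is a map $\lambda:\mathcal{E}(P)\to\mathbb{Z}$. For a maximal chain $s=s_0<s_1<\cdots<s_k=t$ of an interval $[s,t]$, its label sequence is $(\lambda(s_0,s_1),\dots,\lambda(s_{k-1},s_k))$; the chain is increasing if this sequence is weakly increasing. An EL-labeling is an edge-labeling such that every interval $[s,t]$ has exactly one increasing maximal chain, and the label sequence of that chain is strictly lexicographically smaller than that of every other maximal chain of $[s,t]$. An $S_n$ EL-labeling is an EL-labeling such that for every maximal chain $\hat0=x_0<x_1<\cdots<x_n=\hat1$ of $P$, the sequence $(\lambda(x_0,x_1),\dots,\lambda(x_{n-1},x_n))$ is a permutation of $[n]=\{1,\dots,n\}$. A finite lattice $L$ is supersolvable if it contains a maximal chain (an M-chain) which, together with any other chain of $L$, generates a distributive sublattice of $L$. *)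

theory Defs
  imports Main
begin

text \<open>Finite lattices are modelled by a type of class finite and bounded_lattice
  (every finite lattice is bounded, so this is no restriction).\<close>

definition covers :: "'a::order \<Rightarrow> 'a \<Rightarrow> bool" where
  "covers s t \<longleftrightarrow> s < t \<and> \<not> (\<exists>z. s < z \<and> z < t)"

definition max_chain_of :: "'a::order list \<Rightarrow> 'a \<Rightarrow> 'a \<Rightarrow> bool" where
  "max_chain_of xs s t \<longleftrightarrow> xs \<noteq> [] \<and> hd xs = s \<and> last xs = t \<and>
     (\<forall>i. Suc i < length xs \<longrightarrow> covers (xs ! i) (xs ! Suc i))"

definition graded_of_rank :: "nat \<Rightarrow> 'a::bounded_lattice itself \<Rightarrow> bool" where
  "graded_of_rank n _ \<longleftrightarrow>
     (\<forall>xs::'a list. max_chain_of xs bot top \<longrightarrow> length xs = Suc n)"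

definition label_seq :: "('a \<Rightarrow> 'a \<Rightarrow> int) \<Rightarrow> 'a list \<Rightarrow> int list" where
  "label_seq lam xs = map (\<lambda>(a, b). lam a b) (zip xs (tl xs))"

definition increasing_chain :: "('a \<Rightarrow> 'a \<Rightarrow> int) \<Rightarrow> 'a list \<Rightarrow> bool" where
  "increasing_chain lam xs \<longleftrightarrow> sorted (label_seq lam xs)"

text \<open>EL-labeling (the labeling only matters on covering pairs).\<close>
definition EL_labeling :: "('a::order \<Rightarrow> 'a \<Rightarrow> int) \<Rightarrow> bool" where
  "EL_labeling lam \<longleftrightarrow>
     (\<forall>s t. s \<le> t \<longrightarrow>
        (\<exists>!xs. max_chain_of xs s t \<and> increasing_chain lam xs) \<and>
        (\<forall>xs ys. max_chain_of xs s t \<and> increasing_chain lam xs \<and>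
                 max_chain_of ys s t \<and> ys \<noteq> xs \<longrightarrow>
                 (label_seq lam xs, label_seq lam ys) \<in> lexord {(a, b). a < b}))"

definition Sn_EL_labeling :: "nat \<Rightarrow> ('a::bounded_lattice \<Rightarrow> 'a \<Rightarrow> int) \<Rightarrow> bool" where
  "Sn_EL_labeling n lam \<longleftrightarrow> EL_labeling lam \<and>
     (\<forall>xs. max_chain_of xs bot top \<longrightarrow>
        distinct (label_seq lam xs) \<and> set (label_seq lam xs) = {1..int n})"

definition is_chain :: "'a::order set \<Rightarrow> bool" where
  "is_chain C \<longleftrightarrow> (\<forall>x\<in>C. \<forall>y\<in>C. x \<le> y \<or> y \<le> x)"

definition is_maximal_chain :: "'a::order set \<Rightarrow> bool" where
  "is_maximal_chain M \<longleftrightarrow> is_chain M \<and> (\<forall>C. is_chain C \<and> M \<subseteq> C \<longrightarrow> C = M)"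

inductive_set gen_sublattice :: "'a::lattice set \<Rightarrow> 'a set" for S where
  base: "x \<in> S \<Longrightarrow> x \<in> gen_sublattice S"
| meet: "x \<in> gen_sublattice S \<Longrightarrow> y \<in> gen_sublattice S \<Longrightarrow> inf x y \<in> gen_sublattice S"
| join: "x \<in> gen_sublattice S \<Longrightarrow> y \<in> gen_sublattice S \<Longrightarrow> sup x y \<in> gen_sublattice S"

definition distributive_on :: "'a::lattice set \<Rightarrow> bool" where
  "distributive_on D \<longleftrightarrow>
     (\<forall>x\<in>D. \<forall>y\<in>D. \<forall>z\<in>D. inf x (sup y z) = sup (inf x y) (inf x z))"

definition M_chain :: "'a::lattice set \<Rightarrow> bool" where
  "M_chain M \<longleftrightarrow> is_maximal_chain M \<and>
     (\<forall>C. is_chain C \<longrightarrow> distributive_on (gen_sublattice (M \<union> C)))"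

definition supersolvable :: "'a::lattice itself \<Rightarrow> bool" where
  "supersolvable _ \<longleftrightarrow> (\<exists>M::'a set. M_chain M)"

end

theory Submission
  imports Defs
begin


lemma covers_less: "covers s t \<Longrightarrow> s < t" by (simp add: covers_def)

lemma mc_Nil[simp]: "\<not> max_chain_of [] s t"
  by (simp add: max_chain_of_def)

lemma mc_single[simp]: "max_chain_of [x] s t \<longleftrightarrow> x = s \<and> x = t"
  by (auto simp add: max_chain_of_def)

lemma mc_Cons2: "max_chain_of (x # y # ys) s t \<longleftrightarrow> x = s \<and> covers x y \<and> max_chain_of (y # ys) y t"
proof
  assume a: "max_chain_of (x # y # ys) s t"
  have "\<forall>i. Suc i < length (y # ys) \<longrightarrow> covers ((y # ys) ! i) ((y # ys) ! Suc i)"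
  proof (intro allI impI)
    fix i assume "Suc i < length (y # ys)"
    then have "Suc (Suc i) < length (x # y # ys)" by simp
    then show "covers ((y # ys) ! i) ((y # ys) ! Suc i)" using a unfolding max_chain_of_def
      by (metis nth_Cons_Suc)
  qed
  moreover have "x = s" using a unfolding max_chain_of_def by simp
  moreover have "last (y # ys) = t" using a unfolding max_chain_of_def by simp
  moreover have "covers x y"
  proof -
    have "Suc 0 < length (x # y # ys)" by simp
    then have "covers ((x # y # ys) ! 0) ((x # y # ys) ! Suc 0)" using a unfolding max_chain_of_def by blast
    then show ?thesis by simp
  qed
  ultimately show "x = s \<and> covers x y \<and> max_chain_of (y # ys) y t"
    unfolding max_chain_of_def by simp
next
  assume a: "x = s \<and> covers x y \<and> max_chain_of (y # ys) y t"
  have "\<forall>i. Suc i < length (x # y # ys) \<longrightarrow> covers ((x # y # ys) ! i) ((x # y # ys) ! Suc i)"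
  proof (intro allI impI)
    fix i assume i: "Suc i < length (x # y # ys)"
    show "covers ((x # y # ys) ! i) ((x # y # ys) ! Suc i)"
    proof (cases i)
      case 0 then show ?thesis using a by auto
    next
      case (Suc j) then show ?thesis using a i unfolding max_chain_of_def by simp
    qed
  qed
  then show "max_chain_of (x # y # ys) s t" using a unfolding max_chain_of_def by simp
qed

lemma ls_Nil[simp]: "label_seq lam [] = []" by (simp add: label_seq_def)
lemma ls_single[simp]: "label_seq lam [x] = []" by (simp add: label_seq_def)
lemma ls_Cons2[simp]: "label_seq lam (x # y # ys) = lam x y # label_seq lam (y # ys)"
  by (simp add: label_seq_def)

lemma mc_bounds: "max_chain_of xs s t \<Longrightarrow> s \<le> t \<and> (\<forall>z\<in>set xs. s \<le> z \<and> z \<le> t)"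
proof (induction xs arbitrary: s rule: induct_list012)
  case 1 then show ?case by simp
next
  case (2 x) then show ?case by auto
next
  case (3 x y zs)
  then have "x = s" "covers x y" "max_chain_of (y # zs) y t" by (auto simp: mc_Cons2)
  then have ih: "y \<le> t" "\<forall>z\<in>set (y # zs). y \<le> z \<and> z \<le> t" using 3(2)[of y] by auto
  have sy: "s \<le> y" using covers_less[OF \<open>covers x y\<close>] \<open>x = s\<close> by simp
  have "s \<le> t" using sy ih(1) by (rule order.trans)
  moreover have "\<forall>z\<in>set (x # y # zs). s \<le> z \<and> z \<le> t"
  proof
    fix z assume "z \<in> set (x # y # zs)"
    then have "z = x \<or> z \<in> set (y # zs)" by auto
    then show "s \<le> z \<and> z \<le> t"
    proof
      assume "z = x" then show ?thesis using \<open>x = s\<close> \<open>s \<le> t\<close> by simp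
    next
      assume "z \<in> set (y # zs)" then show ?thesis using ih(2) sy by (meson order.trans)
    qed
  qed
  ultimately show ?case by blast
qed

lemma mc_le: "max_chain_of xs s t \<Longrightarrow> s \<le> t" using mc_bounds by blast

lemma mc_same: assumes "max_chain_of xs s s" shows "xs = [s]"
proof (cases xs)
  case Nil then show ?thesis using assms by simp
next
  case (Cons x ys) show ?thesis
  proof (cases ys)
    case Nil then show ?thesis using assms Cons by simp
  next
    case (Cons y zs)
    then have "x = s" "covers x y" "max_chain_of (y # zs) y s" using assms \<open>xs = x # ys\<close> by (auto simp: mc_Cons2)
    then show ?thesis using mc_le covers_less by (metis order.strict_iff_not)
  qed
qed

lemma mc_append: "max_chain_of xs s t \<Longrightarrow> max_chain_of ys t u \<Longrightarrow> max_chain_of (xs @ tl ys) s u"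
proof (induction xs arbitrary: s rule: induct_list012)
  case 1 then show ?case by simp
next
  case (2 x)
  then have "ys = t # tl ys" unfolding max_chain_of_def by (metis list.collapse)
  then have "[x] @ tl ys = ys" using 2 by auto
  then show ?case using 2 by auto
next
  case (3 x y zs)
  then have "x = s" "covers x y" "max_chain_of (y # zs) y t" by (auto simp: mc_Cons2)
  with 3 show ?case by (simp add: mc_Cons2)
qed

lemma ls_append: "max_chain_of xs s t \<Longrightarrow> max_chain_of ys t u \<Longrightarrow>
  label_seq lam (xs @ tl ys) = label_seq lam xs @ label_seq lam ys"
proof (induction xs arbitrary: s rule: induct_list012)
  case 1 then show ?case by simp
next
  case (2 x)
  then have "ys = t # tl ys" unfolding max_chain_of_def by (metis list.collapse)
  then have "[x] @ tl ys = ys" using 2 by auto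
  then show ?case using 2 by auto
next
  case (3 x y zs)
  then have "x = s" "covers x y" "max_chain_of (y # zs) y t" by (auto simp: mc_Cons2)
  with 3 show ?case by simp
qed

lemma mc_first: assumes "max_chain_of xs s t" "s \<noteq> t"
  shows "\<exists>y ys. xs = s # y # ys \<and> covers s y \<and> max_chain_of (y # ys) y t"
proof (cases xs)
  case Nil then show ?thesis using assms by simp
next
  case (Cons x ys) show ?thesis
  proof (cases ys)
    case Nil then show ?thesis using assms Cons by auto
  next
    case (Cons y zs)
    then show ?thesis using assms \<open>xs = x # ys\<close> by (auto simp: mc_Cons2)
  qed
qed

lemma lexord_perm:
  fixes xs ys :: "int list"
  shows "sorted xs \<Longrightarrow> distinct xs \<Longrightarrow> distinct ys \<Longrightarrow> set ys = set xs \<Longrightarrow> ys \<noteq> xs \<Longrightarrow>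
    (xs, ys) \<in> lexord {(a, b). a < b}"
proof (induction xs arbitrary: ys)
  case Nil then show ?case by simp
next
  case (Cons x xs)
  then obtain y ys' where ys: "ys = y # ys'" by (cases ys) auto
  show ?case
  proof (cases "y = x")
    case True
    have "set ys' = set xs" using Cons.prems ys True by auto
    moreover have "ys' \<noteq> xs" using Cons.prems ys True by auto
    moreover have "distinct ys'" using Cons.prems ys by auto
    moreover have "sorted xs" "distinct xs" using Cons.prems by auto
    ultimately have lx: "(xs, ys') \<in> lexord {(a, b). a < b}" using Cons.IH[of ys'] by blast
    show ?thesis unfolding ys True by (rule lexord_cons_cons[THEN iffD2]) (rule disjI2, simp add: lx)
  next
    case False
    then have "y \<in> set xs" using Cons.prems ys by auto
    then have xy: "x < y" using Cons.prems False by auto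
    show ?thesis unfolding ys by (rule lexord_cons_cons[THEN iffD2]) (rule disjI1, simp add: xy)
  qed
qed

lemma cover_exists:
  fixes x y :: "'a::{finite,order}"
  assumes "x < y" shows "\<exists>z. covers x z \<and> z \<le> y"
proof -
  let ?A = "{z. x < z \<and> z \<le> y}"
  have "finite ?A" by simp
  have "y \<in> ?A" using assms by simp
  then have "?A \<noteq> {}" by blast
  then obtain z where z: "z \<in> ?A" "\<forall>b\<in>?A. b \<le> z \<longrightarrow> b = z"
    using finite_has_minimal[OF \<open>finite ?A\<close> \<open>?A \<noteq> {}\<close>] by blast
  have "\<not> (\<exists>w. x < w \<and> w < z)"
  proof
    assume "\<exists>w. x < w \<and> w < z"
    then obtain w where "x < w" "w < z" by blast
    moreover then have "w \<in> ?A" using z(1) by auto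
    ultimately show False using z(2) by auto
  qed
  then have "covers x z" unfolding covers_def using z(1) by auto
  then show ?thesis using z by auto
qed




locale ssl =
  fixes m :: "nat \<Rightarrow> 'a::{finite,bounded_lattice}" and n :: nat
  assumes m0: "m 0 = bot" and mtop: "\<And>i. n \<le> i \<Longrightarrow> m i = top"
    and mcov: "\<And>i. i < n \<Longrightarrow> covers (m i) (m (Suc i))"
    and mdist: "\<And>C. is_chain C \<Longrightarrow> distributive_on (gen_sublattice (range m \<union> C))"
begin

lemma m_mono_Suc: "m i \<le> m (Suc i)"
proof (cases "i < n")
  case True then show ?thesis using mcov covers_less by (blast intro: less_imp_le)
next
  case False then show ?thesis using mtop by simp
qed

lemma m_mono: "i \<le> j \<Longrightarrow> m i \<le> m j"
  by (induction j rule: dec_induct) (auto intro: order.trans m_mono_Suc)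

lemma m_strict: "1 \<le> i \<Longrightarrow> i \<le> n \<Longrightarrow> m (i - 1) \<noteq> m i"
  using mcov[of "i - 1"] covers_less by force

lemma Gb: "x \<in> A \<Longrightarrow> x \<in> gen_sublattice A"
  by (rule gen_sublattice.base)

lemma "m j \<in> gen_sublattice (insert s (range m))"
  apply (rule Gb)
  apply simp
  done

lemma G_m[simp, intro]: "m i \<in> gen_sublattice (range m \<union> C)"
  by (rule gen_sublattice.base) simp
lemma G_C[simp, intro]: "x \<in> C \<Longrightarrow> x \<in> gen_sublattice (range m \<union> C)"
  by (rule gen_sublattice.base) simp
lemma G_inf[intro]: "a \<in> gen_sublattice S \<Longrightarrow> b \<in> gen_sublattice S \<Longrightarrow> inf a b \<in> gen_sublattice S"
  by (rule gen_sublattice.meet)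
lemma G_sup[intro]: "a \<in> gen_sublattice S \<Longrightarrow> b \<in> gen_sublattice S \<Longrightarrow> sup a b \<in> gen_sublattice S"
  by (rule gen_sublattice.join)

lemma D:
  assumes "x \<le> y"
    and "a \<in> gen_sublattice (range m \<union> {x, y})" "b \<in> gen_sublattice (range m \<union> {x, y})"
    "c \<in> gen_sublattice (range m \<union> {x, y})"
  shows "inf a (sup b c) = sup (inf a b) (inf a c)"
proof -
  have "is_chain {x, y}" using assms(1) unfolding is_chain_def by auto
  then show ?thesis using mdist[of "{x, y}"] assms unfolding distributive_on_def by blast
qed

definition lab :: "'a \<Rightarrow> 'a \<Rightarrow> nat" where "lab x y = (LEAST i. y \<le> sup x (m i))"

lemma lab_le: "y \<le> sup x (m (lab x y))"
  unfolding lab_def by (rule LeastI[of _ n]) (simp add: mtop)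

lemma lab_min: "i < lab x y \<Longrightarrow> \<not> y \<le> sup x (m i)"
  unfolding lab_def by (rule not_less_Least)

lemma lab_n: "lab x y \<le> n"
  unfolding lab_def by (rule Least_le) (simp add: mtop)

lemma lab_pos: "x < y \<Longrightarrow> 1 \<le> lab x y"
proof (rule ccontr)
  assume "x < y" "\<not> 1 \<le> lab x y"
  then have "lab x y = 0" by simp
  then have "y \<le> x" using lab_le[of y x] m0 by simp
  then show False using \<open>x < y\<close> by simp
qed

definition S :: "'a \<Rightarrow> nat set" where
  "S x = {i \<in> {1..n}. inf x (m (i - 1)) \<noteq> inf x (m i)}"

lemma S_sub: "S x \<subseteq> {1..n}" unfolding S_def by auto

lemma S_mono: assumes "x \<le> y" shows "S x \<subseteq> S y"
proof
  fix i assume i: "i \<in> S x"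
  show "i \<in> S y"
  proof (rule ccontr)
    assume "i \<notin> S y"
    then have e: "inf y (m (i - 1)) = inf y (m i)" using i unfolding S_def by auto
    have "inf x (m i) \<le> inf y (m i)" using assms by (simp add: le_infI1)
    also have "\<dots> = inf y (m (i - 1))" using e by simp
    also have "\<dots> \<le> m (i - 1)" by simp
    finally have "inf x (m i) \<le> inf x (m (i - 1))" by simp
    moreover have "inf x (m (i - 1)) \<le> inf x (m i)" using m_mono[of "i - 1" i] by (simp add: le_infI2)
    ultimately have "inf x (m (i - 1)) = inf x (m i)" by (meson antisym)
    then show False using i unfolding S_def by auto
  qed
qed

lemma S_bot: "S bot = {}" unfolding S_def by auto

lemma S_top: "S top = {1..n}" unfolding S_def using m_strict by auto

lemma S_join: "S (sup s (m q)) \<subseteq> S s \<union> {1..q}"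
proof
  fix i assume i: "i \<in> S (sup s (m q))"
  show "i \<in> S s \<union> {1..q}"
  proof (rule ccontr)
    assume a: "i \<notin> S s \<union> {1..q}"
    then have iq: "q \<le> i - 1" using i unfolding S_def by auto
    have e: "inf s (m (i - 1)) = inf s (m i)" using a i unfolding S_def by auto
    have G: "\<And>j. inf (m j) (sup s (m q)) = sup (inf (m j) s) (inf (m j) (m q))"
      by (rule D[of s s]) (auto intro!: Gb)
    have "inf (sup s (m q)) (m (i - 1)) = sup (inf s (m (i - 1))) (m q)"
      using G[of "i - 1"] m_mono[OF iq] by (simp add: inf_commute inf_absorb1 inf_absorb2)
    also have "\<dots> = sup (inf s (m i)) (m q)" using e by simp
    also have "\<dots> = inf (sup s (m q)) (m i)"
      using G[of i] m_mono[of q i] iq by (simp add: inf_commute inf_absorb1 inf_absorb2)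
    finally show False using i unfolding S_def by auto
  qed
qed

lemma step:
  assumes cv: "covers x y"
  shows "S y = insert (lab x y) (S x)" "lab x y \<notin> S x" "lab x y \<in> {1..n}"
proof -
  define k where "k = lab x y"
  have xy: "x < y" using cv covers_less by blast
  have xle: "x \<le> y" using xy by simp
  have k1: "1 \<le> k" using lab_pos[OF xy] k_def by simp
  have kn: "k \<le> n" using lab_n k_def by simp
  have btw: "\<And>w. x \<le> w \<Longrightarrow> w \<le> y \<Longrightarrow> w = x \<or> w = y"
    using cv unfolding covers_def by (metis order.strict_iff_order)
  let ?G = "gen_sublattice (range m \<union> {x, y})"
  have Gx: "x \<in> ?G" and Gy: "y \<in> ?G" and Gm: "\<And>i. m i \<in> ?G" by (auto intro!: Gb)
  have Gi: "\<And>a b. a \<in> ?G \<Longrightarrow> b \<in> ?G \<Longrightarrow> inf a b \<in> ?G" by (rule gen_sublattice.meet)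
  have Gs: "\<And>a b. a \<in> ?G \<Longrightarrow> b \<in> ?G \<Longrightarrow> sup a b \<in> ?G" by (rule gen_sublattice.join)
  have dist: "\<And>a b c. a \<in> ?G \<Longrightarrow> b \<in> ?G \<Longrightarrow> c \<in> ?G \<Longrightarrow> inf a (sup b c) = sup (inf a b) (inf a c)"
    using D[OF xle] by blast
  have eqy: "\<And>i. inf y (sup x (m i)) = sup x (inf y (m i))"
    using dist[OF Gy Gx Gm] inf_absorb2[OF xle] by simp
  have low: "\<And>i. i < k \<Longrightarrow> inf y (m i) = inf x (m i)"
  proof -
    fix i assume "i < k"
    then have ny: "\<not> y \<le> sup x (m i)" using lab_min k_def by blast
    have "x \<le> inf y (sup x (m i))" using xle by simp
    moreover have "inf y (sup x (m i)) \<le> y" by simp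
    ultimately have "inf y (sup x (m i)) = x \<or> inf y (sup x (m i)) = y" using btw by blast
    moreover have "inf y (sup x (m i)) \<noteq> y" using ny by (metis inf.cobounded2)
    ultimately have "sup x (inf y (m i)) = x" using eqy by simp
    then have "inf y (m i) \<le> x" by (metis sup.cobounded2)
    then have "inf y (m i) \<le> inf x (m i)" by simp
    moreover have "inf x (m i) \<le> inf y (m i)" using xle by (simp add: le_infI1)
    ultimately show "inf y (m i) = inf x (m i)" by (rule antisym)
  qed
  have high: "\<And>i. k \<le> i \<Longrightarrow> sup x (inf y (m i)) = y"
  proof -
    fix i assume ki: "k \<le> i"
    have "y \<le> sup x (m k)" using lab_le k_def by simp
    also have "\<dots> \<le> sup x (m i)" using m_mono[OF ki] by (simp add: sup.coboundedI2)
    finally have "inf y (sup x (m i)) = y" by (simp add: inf_absorb1)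
    then show "sup x (inf y (m i)) = y" using eqy by simp
  qed
  have neq: "\<And>i. k \<le> i \<Longrightarrow> inf y (m i) \<noteq> inf x (m i)"
  proof
    fix i assume "k \<le> i" "inf y (m i) = inf x (m i)"
    then have "sup x (inf x (m i)) = y" using high by metis
    then have "x = y" by simp
    then show False using xy by simp
  qed
  have kSy: "k \<in> S y"
  proof (rule ccontr)
    assume "k \<notin> S y"
    then have e: "inf y (m (k - 1)) = inf y (m k)" using k1 kn unfolding S_def by auto
    have "inf y (m k) = inf x (m (k - 1))" using e low[of "k - 1"] k1 by simp
    also have "\<dots> \<le> inf x (m k)" using m_mono[of "k - 1" k] by (simp add: le_infI2)
    finally have "inf y (m k) \<le> inf x (m k)" .
    moreover have "inf x (m k) \<le> inf y (m k)" using xle by (simp add: le_infI1)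
    ultimately have "inf y (m k) = inf x (m k)" by (rule antisym)
    then show False using neq[of k] by simp
  qed
  have kSx: "k \<notin> S x"
  proof
    assume kx: "k \<in> S x"
    define j where "j = k - 1"
    have kj: "k = Suc j" using k1 j_def by simp
    have jn: "j < n" using kn kj by simp
    have mjk: "m j \<le> m k" using m_mono[of j k] kj by simp
    have aj: "inf x (m j) \<noteq> inf x (m k)" using kx j_def unfolding S_def by auto
    have bj: "inf y (m j) = inf x (m j)" using low kj by simp
    have c1: "m j \<le> sup (inf x (m k)) (m j)" by simp
    have c2: "sup (inf x (m k)) (m j) \<le> m k" using mjk by (simp add: le_infI2)
    have "sup (inf x (m k)) (m j) = m j \<or> sup (inf x (m k)) (m j) = m k"
      using mcov[OF jn] kj c1 c2 unfolding covers_def by (metis order.strict_iff_order)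
    moreover have "sup (inf x (m k)) (m j) \<noteq> m j"
    proof
      assume "sup (inf x (m k)) (m j) = m j"
      then have "inf x (m k) \<le> m j" by (metis sup.cobounded1)
      then have "inf x (m k) \<le> inf x (m j)" by simp
      moreover have "inf x (m j) \<le> inf x (m k)" using mjk by (simp add: le_infI2)
      ultimately have "inf x (m j) = inf x (m k)" by (rule antisym[rotated])
      then show False using aj by simp
    qed
    ultimately have jk: "sup (inf x (m k)) (m j) = m k" by blast
    have "inf y (m k) = inf (inf y (m k)) (sup (inf x (m k)) (m j))" using jk by simp
    also have "\<dots> = sup (inf (inf y (m k)) (inf x (m k))) (inf (inf y (m k)) (m j))"
      by (rule dist; intro Gi Gs Gx Gy Gm)
    also have "\<dots> = sup (inf x (m k)) (inf y (m j))"
    proof -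
      have "inf (inf y (m k)) (inf x (m k)) = inf x (m k)" using xle
        by (simp add: inf_absorb2 le_infI1)
      moreover have "inf (inf y (m k)) (m j) = inf y (m j)" using mjk
        by (simp add: inf_assoc inf_absorb2)
      ultimately show ?thesis by simp
    qed
    also have "\<dots> = inf x (m k)" using bj mjk
      by (simp add: le_infI2 sup_absorb1)
    finally show False using neq[of k] by simp
  qed
  have hiS: "\<And>i. k < i \<Longrightarrow> i \<in> S y \<Longrightarrow> i \<in> S x"
  proof (rule ccontr)
    fix i assume ki: "k < i" and iy: "i \<in> S y" and nx: "i \<notin> S x"
    have ax: "inf x (m (i - 1)) = inf x (m i)" using nx iy unfolding S_def by auto
    have mi: "m (i - 1) \<le> m i" by (rule m_mono) simp
    have hj: "sup x (inf y (m (i - 1))) = y" using high ki by simp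
    have "inf y (m i) = inf (inf y (m i)) (sup x (inf y (m (i - 1))))" using hj
      by (simp add: inf.absorb1)
    also have "\<dots> = sup (inf (inf y (m i)) x) (inf (inf y (m i)) (inf y (m (i - 1))))"
      by (rule dist; intro Gi Gs Gx Gy Gm)
    also have "\<dots> = sup (inf x (m i)) (inf y (m (i - 1)))"
    proof -
      have "inf (inf y (m i)) x = inf x (m i)" using xle
        by (metis inf.absorb_iff2 inf_assoc inf_commute)
      moreover have "inf (inf y (m i)) (inf y (m (i - 1))) = inf y (m (i - 1))" using mi
        by (metis inf.absorb_iff2 inf.assoc inf.left_commute inf.left_idem)
      ultimately show ?thesis by simp
    qed
    also have "\<dots> = inf y (m (i - 1))"
    proof -
      have "inf x (m i) \<le> inf y (m (i - 1))" using ax xle by (metis inf_mono order_refl)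
      then show ?thesis by (simp add: sup_absorb2)
    qed
    finally show False using iy unfolding S_def by auto
  qed
  have "S y = insert k (S x)"
  proof (rule set_eqI)
    fix i show "i \<in> S y \<longleftrightarrow> i \<in> insert k (S x)"
    proof (cases "i < k")
      case True
      then have "inf y (m i) = inf x (m i)" "inf y (m (i - 1)) = inf x (m (i - 1))" using low by auto
      then show ?thesis using True unfolding S_def by auto
    next
      case False
      show ?thesis
      proof (cases "i = k")
        case True then show ?thesis using kSy by simp
      next
        case False2: False
        then have "k < i" using False by simp
        then show ?thesis using hiS S_mono[OF xle] False2 by auto
      qed
    qed
  qed
  then show "S y = insert (lab x y) (S x)" using k_def by simp
  show "lab x y \<notin> S x" using kSx k_def by simp
  show "lab x y \<in> {1..n}" using k1 kn k_def by simp
qed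

lemma S_strict: assumes "x < y" shows "S x \<subset> S y"
proof -
  obtain z where z: "covers x z" "z \<le> y" using cover_exists[OF assms] by blast
  have "S z = insert (lab x z) (S x)" "lab x z \<notin> S x" using step[OF z(1)] by auto
  moreover have "S z \<subseteq> S y" using S_mono[OF z(2)] .
  ultimately show ?thesis by blast
qed

lemma S_eq: "x \<le> y \<Longrightarrow> S y \<subseteq> S x \<Longrightarrow> x = y"
proof (rule ccontr)
  assume "x \<le> y" "S y \<subseteq> S x" "x \<noteq> y"
  then have "S x \<subset> S y" using S_strict by simp
  then show False using \<open>S y \<subseteq> S x\<close> by blast
qed

definition lamS :: "'a \<Rightarrow> 'a \<Rightarrow> int" where "lamS x y = int (lab x y)"

lemma chain_labels:
  "max_chain_of xs s t \<Longrightarrow> distinct (label_seq lamS xs) \<and> set (label_seq lamS xs) = int ` (S t - S s) \<and> S s \<subseteq> S t"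
proof (induction xs arbitrary: s rule: induct_list012)
  case 1 then show ?case by simp
next
  case (2 x) then show ?case by auto
next
  case (3 x y zs)
  then have x: "x = s" "covers x y" and c: "max_chain_of (y # zs) y t" by (auto simp: mc_Cons2)
  have ih: "distinct (label_seq lamS (y # zs))" "set (label_seq lamS (y # zs)) = int ` (S t - S y)" "S y \<subseteq> S t"
    using 3(2)[OF c] by auto
  have st: "S y = insert (lab x y) (S x)" "lab x y \<notin> S x" using step[OF x(2)] by auto
  have ly: "lab x y \<in> S y" using st(1) by blast
  have "int (lab x y) \<notin> int ` (S t - S y)"
  proof
    assume "int (lab x y) \<in> int ` (S t - S y)"
    then obtain j where "j \<in> S t - S y" "int (lab x y) = int j" by blast
    then show False using ly by simp
  qed
  then have "distinct (label_seq lamS (x # y # zs))" using ih by (simp add: lamS_def)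
  moreover have "set (label_seq lamS (x # y # zs)) = int ` (S t - S s)"
  proof -
    have "S t - S s = insert (lab x y) (S t - S y)" using st ih(3) x(1) ly by blast
    then show ?thesis using ih(2) by (simp add: lamS_def)
  qed
  moreover have "S s \<subseteq> S t" using st ih(3) x(1) by blast
  ultimately show ?case by blast
qed

lemma next_step:
  assumes st: "s < t"
  defines "l \<equiv> Min (S t - S s)"
  defines "s' \<equiv> inf t (sup s (m l))"
  shows "covers s s'" "s' \<le> t" "lab s s' = l" "S s' = insert l (S s)" "l \<in> S t - S s"
    "\<And>z. covers s z \<Longrightarrow> z \<le> t \<Longrightarrow> lab s z = l \<Longrightarrow> z = s'"
proof -
  have sle: "s \<le> t" using st by simp
  have ne: "S t - S s \<noteq> {}" using S_strict[OF st] by auto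
  have "finite (S t)" using finite_subset[OF S_sub] by simp
  then have fin: "finite (S t - S s)" by simp
  show lin: "l \<in> S t - S s" unfolding l_def using Min_in[OF fin ne] .
  have lmin: "\<And>i. i \<in> S t - S s \<Longrightarrow> l \<le> i" unfolding l_def using Min_le[OF fin] by blast
  show s't: "s' \<le> t" unfolding s'_def by simp
  have ss': "s \<le> s'" unfolding s'_def using sle by simp
  have sub: "S s' \<subseteq> insert l (S s)"
  proof
    fix i assume i: "i \<in> S s'"
    have "i \<in> S t" using S_mono[OF s't] i by auto
    have "i \<in> S (sup s (m l))" using S_mono[of s' "sup s (m l)"] i unfolding s'_def by auto
    then have "i \<in> S s \<union> {1..l}" using S_join[of s l] by blast
    show "i \<in> insert l (S s)"
    proof (cases "i \<in> S s")
      case False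
      then have "l \<le> i" using lmin \<open>i \<in> S t\<close> by blast
      moreover have "i \<le> l" using False \<open>i \<in> S s \<union> {1..l}\<close> by auto
      ultimately show ?thesis by simp
    qed simp
  qed
  have nes: "s \<noteq> s'"
  proof
    assume e: "s = s'"
    let ?G = "gen_sublattice (range m \<union> {s, t})"
    have "inf t (sup s (m l)) = sup (inf t s) (inf t (m l))"
      by (rule D[OF sle]) (auto intro!: Gb)
    then have "s = sup s (inf t (m l))" using e sle unfolding s'_def by (simp add: inf_absorb2)
    then have tl: "inf t (m l) \<le> s" by (metis sup.cobounded2)
    have e1: "inf t (m l) = inf s (m l)"
    proof (rule antisym)
      show "inf t (m l) \<le> inf s (m l)" using tl by simp
      show "inf s (m l) \<le> inf t (m l)" using sle by (simp add: le_infI1)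
    qed
    have "inf t (m (l - 1)) \<le> inf t (m l)" using m_mono[of "l - 1" l] by (simp add: le_infI2)
    then have "inf t (m (l - 1)) \<le> s" using tl by (rule order.trans)
    then have e2: "inf t (m (l - 1)) = inf s (m (l - 1))"
    proof (intro antisym)
      assume "inf t (m (l - 1)) \<le> s"
      then show "inf t (m (l - 1)) \<le> inf s (m (l - 1))" by simp
      show "inf s (m (l - 1)) \<le> inf t (m (l - 1))" using sle by (simp add: le_infI1)
    qed
    show False using lin e1 e2 unfolding S_def by auto
  qed
  then have ss'l: "s < s'" using ss' by simp
  show Ss': "S s' = insert l (S s)" using S_strict[OF ss'l] sub by blast
  show cv: "covers s s'" unfolding covers_def
  proof (intro conjI ss'l notI)
    assume "\<exists>z>s. z < s'"
    then obtain w where w: "s < w" "w < s'" by blast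
    have a1: "S s \<subset> S w" and a2: "S w \<subset> S s'" using S_strict w by auto
    then obtain i where "i \<in> S w" "i \<notin> S s" by blast
    then have "i = l" using a2 Ss' by blast
    then have "insert l (S s) \<subseteq> S w" using a1 \<open>i \<in> S w\<close> by blast
    then show False using a2 Ss' by blast
  qed
  show "lab s s' = l" using step[OF cv] Ss' by auto
  fix z assume z: "covers s z" "z \<le> t" "lab s z = l"
  have "z \<le> sup s (m l)" using lab_le[of z s] z(3) by simp
  then have zs': "z \<le> s'" using z(2) unfolding s'_def by simp
  have "S z = insert l (S s)" using step[OF z(1)] z(3) by simp
  then show "z = s'" using S_eq[OF zs'] Ss' by simp
qed

lemma el_unique:
  "s \<le> t \<Longrightarrow> \<exists>!xs. max_chain_of xs s t \<and> increasing_chain lamS xs"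
proof (induction "card (S t - S s)" arbitrary: s rule: less_induct)
  case (less s)
  show ?case
  proof (cases "s = t")
    case True
    show ?thesis
    proof (rule ex1I[of _ "[s]"])
      show "max_chain_of [s] s t \<and> increasing_chain lamS [s]" using True by (simp add: increasing_chain_def)
      fix xs assume "max_chain_of xs s t \<and> increasing_chain lamS xs"
      then show "xs = [s]" using mc_same True by blast
    qed
  next
    case False
    then have st: "s < t" using less.prems by simp
    define l where "l = Min (S t - S s)"
    define s' where "s' = inf t (sup s (m l))"
    note ns = next_step[OF st, folded l_def, folded s'_def]
    have "finite (S t)" using finite_subset[OF S_sub] by simp
    then have fin: "finite (S t - S s)" by simp
    have lmin: "\<And>i. i \<in> S t - S s \<Longrightarrow> l \<le> i" unfolding l_def using Min_le[OF fin] by blast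
    have card_lt: "card (S t - S s') < card (S t - S s)"
    proof (rule psubset_card_mono[OF fin])
      show "S t - S s' \<subset> S t - S s" using ns(4) ns(5) by blast
    qed
    have s't: "s' \<le> t" using ns(2) .
    obtain ys where ys: "max_chain_of ys s' t" "increasing_chain lamS ys"
      and yu: "\<And>zs. max_chain_of zs s' t \<and> increasing_chain lamS zs \<Longrightarrow> zs = ys"
      using less.hyps[OF card_lt s't] by blast
    obtain r where ysr: "ys = s' # r" using ys(1) unfolding max_chain_of_def by (metis list.collapse)
    have lt: "\<forall>v\<in>set (label_seq lamS ys). lamS s s' \<le> v"
    proof
      fix v assume "v \<in> set (label_seq lamS ys)"
      then obtain i where i: "i \<in> S t - S s'" "v = int i" using chain_labels[OF ys(1)] by blast
      then have "i \<in> S t - S s" using ns(4) by blast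
      then have "l \<le> i" using lmin by blast
      then show "lamS s s' \<le> v" using i ns(3) by (simp add: lamS_def)
    qed
    show ?thesis
    proof (rule ex1I[of _ "s # ys"])
      have "max_chain_of (s # s' # r) s t" using ns(1) ys(1) ysr by (simp add: mc_Cons2)
      moreover have "increasing_chain lamS (s # s' # r)"
        using lt ys(2) ysr by (simp add: increasing_chain_def)
      ultimately show "max_chain_of (s # ys) s t \<and> increasing_chain lamS (s # ys)" using ysr by simp
    next
      fix zs assume zs: "max_chain_of zs s t \<and> increasing_chain lamS zs"
      obtain z r' where zr: "zs = s # z # r'" "covers s z" "max_chain_of (z # r') z t"
        using mc_first[of zs s t] zs False by blast
      have zt: "z \<le> t" using mc_le[OF zr(3)] .
      have srt: "sorted (lamS s z # label_seq lamS (z # r'))"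
        using zs zr(1) by (simp add: increasing_chain_def)
      have cl: "set (label_seq lamS zs) = int ` (S t - S s)" using chain_labels zs by blast
      have labin: "lab s z \<in> S t - S s"
      proof -
        have "lamS s z \<in> set (label_seq lamS zs)" using zr(1) by simp
        then show ?thesis using cl by (auto simp: lamS_def)
      qed
      have labmin: "\<And>i. i \<in> S t - S s \<Longrightarrow> lab s z \<le> i"
      proof -
        fix i assume "i \<in> S t - S s"
        then have "int i \<in> set (lamS s z # label_seq lamS (z # r'))" using cl zr(1) by auto
        then have "lamS s z \<le> int i" using srt by auto
        then show "lab s z \<le> i" by (simp add: lamS_def)
      qed
      have "Min (S t - S s) = lab s z" by (rule Min_eqI[OF fin labmin labin])
      then have "lab s z = l" using l_def by simp
      then have zs': "z = s'" using ns(6)[OF zr(2) zt] by simp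
      have "increasing_chain lamS (z # r')" using srt by (simp add: increasing_chain_def)
      then have "z # r' = ys" using yu zr(3) zs' by blast
      then show "zs = s # ys" using zr(1) by simp
    qed
  qed
qed

lemma EL: "EL_labeling lamS"
  unfolding EL_labeling_def
proof (intro allI impI conjI)
  fix s t :: 'a assume st: "s \<le> t"
  show "\<exists>!xs. max_chain_of xs s t \<and> increasing_chain lamS xs" by (rule el_unique[OF st])
next
  fix s t :: 'a and xs ys :: "'a list"
  assume st: "s \<le> t"
    and a: "max_chain_of xs s t \<and> increasing_chain lamS xs \<and> max_chain_of ys s t \<and> ys \<noteq> xs"
  have ni: "\<not> increasing_chain lamS ys" using el_unique[OF st] a by blast
  have dx: "distinct (label_seq lamS xs)" "set (label_seq lamS xs) = int ` (S t - S s)"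
    using chain_labels a by blast+
  have dy: "distinct (label_seq lamS ys)" "set (label_seq lamS ys) = int ` (S t - S s)"
    using chain_labels a by blast+
  have ne: "label_seq lamS ys \<noteq> label_seq lamS xs" using ni a unfolding increasing_chain_def by auto
  show "(label_seq lamS xs, label_seq lamS ys) \<in> lexord {(a, b). a < b}"
    using lexord_perm[of "label_seq lamS xs" "label_seq lamS ys"] a dx dy ne
    unfolding increasing_chain_def by simp
qed

lemma Sn: "Sn_EL_labeling n lamS"
  unfolding Sn_EL_labeling_def
proof (intro conjI allI impI EL)
  fix xs :: "'a list" assume "max_chain_of xs bot top"
  then have "distinct (label_seq lamS xs)" "set (label_seq lamS xs) = int ` (S top - S bot)"
    using chain_labels by blast+
  then show "distinct (label_seq lamS xs)" "set (label_seq lamS xs) = {1..int n}"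
    using S_top S_bot image_int_atLeastAtMost[of 1 n] by simp_all
qed

end



lemma chain_sorted_list:
  fixes A :: "'a::order set"
  assumes "finite A" "is_chain A"
  shows "\<exists>xs. sorted_wrt (<) xs \<and> set xs = A"
using assms
proof (induction "card A" arbitrary: A rule: less_induct)
  case (less A)
  show ?case
  proof (cases "A = {}")
    case True then show ?thesis by (intro exI[of _ "[]"]) simp
  next
    case False
    obtain g where g: "g \<in> A" "\<forall>b\<in>A. g \<le> b \<longrightarrow> g = b"
      using finite_has_maximal[OF less.prems(1) False] by blast
    have gmax: "\<forall>a\<in>A. a \<le> g" using g less.prems(2) unfolding is_chain_def by blast
    have "card (A - {g}) < card A" using less.prems(1) g(1) by (rule card_Diff1_less)
    moreover have "is_chain (A - {g})" using less.prems(2) unfolding is_chain_def by blast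
    moreover have "finite (A - {g})" using less.prems(1) by simp
    ultimately obtain xs where xs: "sorted_wrt (<) xs" "set xs = A - {g}"
      using less.hyps[of "A - {g}"] by blast
    have "\<forall>x\<in>set xs. x < g" using xs(2) gmax by (auto simp: order.strict_iff_order)
    then have "sorted_wrt (<) (xs @ [g])" using xs(1) by (simp add: sorted_wrt_append)
    moreover have "set (xs @ [g]) = A" using xs g(1) by auto
    ultimately show ?thesis by blast
  qed
qed

lemma maxchain_list:
  fixes M :: "'a::{finite,bounded_lattice} set"
  assumes mx: "is_maximal_chain M" and so: "sorted_wrt (<) xs" and sx: "set xs = M"
  shows "max_chain_of xs bot top"
proof -
  have ch: "is_chain M" using mx unfolding is_maximal_chain_def by blast
  have ins: "\<And>z. (\<And>y. y \<in> M \<Longrightarrow> y \<le> z \<or> z \<le> y) \<Longrightarrow> z \<in> M"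
  proof -
    fix z assume a: "\<And>y. y \<in> M \<Longrightarrow> y \<le> z \<or> z \<le> y"
    have "is_chain (insert z M)" using ch a unfolding is_chain_def by blast
    then have "insert z M = M" using mx unfolding is_maximal_chain_def by blast
    then show "z \<in> M" by blast
  qed
  have botM: "bot \<in> M" using ins by simp
  have topM: "top \<in> M" using ins by simp
  have ne: "xs \<noteq> []" using botM sx by auto
  have mono: "\<And>i j. i \<le> j \<Longrightarrow> j < length xs \<Longrightarrow> xs ! i \<le> xs ! j"
  proof -
    fix i j assume "i \<le> j" "j < length xs"
    then show "xs ! i \<le> xs ! j"
    proof (cases "i = j")
      case False
      then have "i < j" using \<open>i \<le> j\<close> by simp
      then show ?thesis using sorted_wrt_nth_less[OF so] \<open>j < length xs\<close> by (simp add: less_imp_le)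
    qed simp
  qed
  have lt: "\<And>i j. i < j \<Longrightarrow> j < length xs \<Longrightarrow> xs ! i < xs ! j"
    using sorted_wrt_nth_less[OF so] by blast
  obtain jb where jb: "jb < length xs" "xs ! jb = bot" using botM sx by (metis in_set_conv_nth)
  obtain jt where jt: "jt < length xs" "xs ! jt = top" using topM sx by (metis in_set_conv_nth)
  have hd: "hd xs = bot"
  proof -
    have "xs ! 0 \<le> xs ! jb" using mono[of 0 jb] jb(1) by simp
    then have "xs ! 0 = bot" using jb(2) by (simp add: bot_unique)
    then show ?thesis using ne by (simp add: hd_conv_nth)
  qed
  have last: "last xs = top"
  proof -
    have "xs ! jt \<le> xs ! (length xs - 1)" using mono[of jt "length xs - 1"] jt(1) by simp
    then have "xs ! (length xs - 1) = top" using jt(2) by (simp add: top_unique)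
    then show ?thesis using ne by (simp add: last_conv_nth)
  qed
  have cov: "\<And>i. Suc i < length xs \<Longrightarrow> covers (xs ! i) (xs ! Suc i)"
  proof -
    fix i assume i: "Suc i < length xs"
    have l1: "xs ! i < xs ! Suc i" using lt i by simp
    have "\<not> (\<exists>z. xs ! i < z \<and> z < xs ! Suc i)"
    proof
      assume "\<exists>z. xs ! i < z \<and> z < xs ! Suc i"
      then obtain z where z: "xs ! i < z" "z < xs ! Suc i" by blast
      have "z \<in> M"
      proof (rule ins)
        fix y assume "y \<in> M"
        then obtain j where j: "j < length xs" "xs ! j = y" using sx by (metis in_set_conv_nth)
        show "y \<le> z \<or> z \<le> y"
        proof (cases "j \<le> i")
          case True
          then have "y \<le> xs ! i" using mono j i by auto
          then have "y \<le> z" using z(1) by simp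
          then show ?thesis by simp
        next
          case False
          then have "xs ! Suc i \<le> y" using mono j by auto
          then have "z \<le> y" using z(2) by simp
          then show ?thesis by simp
        qed
      qed
      then obtain j where j: "j < length xs" "xs ! j = z" using sx by (metis in_set_conv_nth)
      show False
      proof (cases "j \<le> i")
        case True
        then have "z \<le> xs ! i" using mono j i by auto
        then show False using z by simp
      next
        case False
        then have "xs ! Suc i \<le> z" using mono j by auto
        then show False using z by simp
      qed
    qed
    then show "covers (xs ! i) (xs ! Suc i)" unfolding covers_def using l1 by blast
  qed
  show ?thesis unfolding max_chain_of_def using ne hd last cov by blast
qed

lemma forward:
  fixes M :: "'a::{finite,bounded_lattice} set"
  assumes g: "graded_of_rank n TYPE('a)" and MC: "M_chain M"
  shows "\<exists>lam :: 'a \<Rightarrow> 'a \<Rightarrow> int. Sn_EL_labeling n lam"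
proof -
  have mx: "is_maximal_chain M" and dM: "\<And>C. is_chain C \<Longrightarrow> distributive_on (gen_sublattice (M \<union> C))"
    using MC unfolding M_chain_def by auto
  have "is_chain M" using mx unfolding is_maximal_chain_def by blast
  then obtain xs where xs: "sorted_wrt (<) xs" "set xs = M" using chain_sorted_list[of M] by auto
  have mc: "max_chain_of xs bot top" using maxchain_list[OF mx xs] .
  have len: "length xs = Suc n" using g mc unfolding graded_of_rank_def by blast
  define m where "m i = xs ! (min i n)" for i
  have rm: "range m = M"
  proof
    show "range m \<subseteq> M" using xs(2) len unfolding m_def by auto
    show "M \<subseteq> range m"
    proof
      fix y assume "y \<in> M"
      then obtain j where j: "j < length xs" "xs ! j = y" using xs(2) by (metis in_set_conv_nth)
      then have "m j = y" using len unfolding m_def by simp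
      then show "y \<in> range m" by blast
    qed
  qed
  have "ssl m n"
  proof
    have "xs \<noteq> []" "hd xs = bot" using mc unfolding max_chain_of_def by auto
    then show "m 0 = bot" unfolding m_def by (simp add: hd_conv_nth)
    have "xs \<noteq> []" "last xs = top" using mc unfolding max_chain_of_def by auto
    then have "xs ! n = top" using len by (simp add: last_conv_nth)
    then show "\<And>i. n \<le> i \<Longrightarrow> m i = top" unfolding m_def by simp
    show "\<And>i. i < n \<Longrightarrow> covers (m i) (m (Suc i))"
      using mc len unfolding m_def max_chain_of_def by simp
    show "\<And>C. is_chain C \<Longrightarrow> distributive_on (gen_sublattice (range m \<union> C))"
      using dM rm by simp
  qed
  then show ?thesis using ssl.Sn by blast
qed




lemma ls_length: "length (label_seq lam xs) = length xs - 1"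
  by (simp add: label_seq_def)

lemma ls_nth: "Suc i < length xs \<Longrightarrow> label_seq lam xs ! i = lam (xs ! i) (xs ! Suc i)"
  by (simp add: label_seq_def nth_tl)

locale snel =
  fixes lam :: "'a::{finite,bounded_lattice} \<Rightarrow> 'a \<Rightarrow> int" and n :: nat
  assumes sn: "Sn_EL_labeling n lam"
begin

lemma el: "EL_labeling lam" using sn unfolding Sn_EL_labeling_def by blast

lemma perm: "max_chain_of xs bot top \<Longrightarrow> distinct (label_seq lam xs) \<and> set (label_seq lam xs) = {1..int n}"
  using sn unfolding Sn_EL_labeling_def by blast

lemma ex_inc: "s \<le> t \<Longrightarrow> \<exists>xs. max_chain_of xs s t \<and> increasing_chain lam xs"
  using el unfolding EL_labeling_def by blast

lemma uniq_inc: "max_chain_of xs s t \<Longrightarrow> increasing_chain lam xs \<Longrightarrow>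
   max_chain_of ys s t \<Longrightarrow> increasing_chain lam ys \<Longrightarrow> xs = ys"
  using el mc_le unfolding EL_labeling_def by blast

lemma ex_chain: assumes "s \<le> (t::'a)" shows "\<exists>xs. max_chain_of xs s t"
  using ex_inc[OF assms] by blast

definition S :: "'a \<Rightarrow> int set" where
  "S x = set (label_seq lam (SOME xs. max_chain_of xs bot x))"

lemma split_set: "distinct (A @ B) \<Longrightarrow> set (A @ B) = U \<Longrightarrow> set A = U - set B"
  by auto

lemma P1: assumes xs: "max_chain_of xs bot x" shows "set (label_seq lam xs) = S x"
proof -
  let ?zs = "SOME xs. max_chain_of xs bot x"
  have zs: "max_chain_of ?zs bot x" using someI_ex[OF ex_chain[of bot x]] by simp
  obtain ys where ys: "max_chain_of ys x top" using ex_chain[of x top] by auto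
  have a: "distinct (label_seq lam xs @ label_seq lam ys) \<and> set (label_seq lam xs @ label_seq lam ys) = {1..int n}"
    using perm[OF mc_append[OF xs ys]] ls_append[OF xs ys] by simp
  have b: "distinct (label_seq lam ?zs @ label_seq lam ys) \<and> set (label_seq lam ?zs @ label_seq lam ys) = {1..int n}"
    using perm[OF mc_append[OF zs ys]] ls_append[OF zs ys] by simp
  have "set (label_seq lam xs) = {1..int n} - set (label_seq lam ys)" using a split_set by blast
  moreover have "set (label_seq lam ?zs) = {1..int n} - set (label_seq lam ys)" using b split_set by blast
  ultimately show ?thesis unfolding S_def by simp
qed

lemma CL: assumes zs: "max_chain_of zs x y"
  shows "set (label_seq lam zs) = S y - S x" "S x \<subseteq> S y"
proof -
  obtain xs where xs: "max_chain_of xs bot x" using ex_chain[of bot x] by auto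
  obtain ws where ws: "max_chain_of ws y top" using ex_chain[of y top] by auto
  have c1: "max_chain_of (xs @ tl zs) bot y" using mc_append[OF xs zs] .
  have l1: "label_seq lam (xs @ tl zs) = label_seq lam xs @ label_seq lam zs" using ls_append[OF xs zs] .
  have sy: "S y = S x \<union> set (label_seq lam zs)" using P1[OF c1] P1[OF xs] l1 by simp
  have c2: "max_chain_of ((xs @ tl zs) @ tl ws) bot top" using mc_append[OF c1 ws] .
  have "label_seq lam ((xs @ tl zs) @ tl ws) = (label_seq lam xs @ label_seq lam zs) @ label_seq lam ws"
    using ls_append[OF c1 ws] l1 by simp
  then have d: "distinct ((label_seq lam xs @ label_seq lam zs) @ label_seq lam ws)" using perm[OF c2] by metis
  then have "distinct (label_seq lam xs @ label_seq lam zs)" by (simp only: distinct_append)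
  then have "set (label_seq lam xs) \<inter> set (label_seq lam zs) = {}" by (simp only: distinct_append)
  then have "S x \<inter> set (label_seq lam zs) = {}" using P1[OF xs] by simp
  then show "set (label_seq lam zs) = S y - S x" "S x \<subseteq> S y" using sy by auto
qed

lemma S_mono: "x \<le> y \<Longrightarrow> S x \<subseteq> S y"
  using ex_chain CL(2) by blast

lemma S_eq: assumes "x \<le> y" "S y \<subseteq> S x" shows "x = y"
proof (rule ccontr)
  assume ne: "x \<noteq> y"
  obtain zs where zs: "max_chain_of zs x y" using ex_chain[OF assms(1)] by auto
  obtain z r where "zs = x # z # r" using mc_first[OF zs ne] by blast
  then have "lam x z \<in> set (label_seq lam zs)" by simp
  then show False using CL(1)[OF zs] assms(2) by blast
qed

lemma S_bot: "S bot = {}" using P1[of "[bot]" bot] by simp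

lemma S_top: "S top = {1..int n}"
proof -
  obtain xs where "max_chain_of xs (bot::'a) top" using ex_chain[OF bot_least[of top]] by blast
  then show ?thesis using P1 perm by blast
qed

lemma S_sub: "S x \<subseteq> {1..int n}" using S_mono[of x top] S_top by simp

definition ms :: "'a list" where "ms = (THE xs. max_chain_of xs bot top \<and> increasing_chain lam xs)"

lemma ms: "max_chain_of ms bot top" "increasing_chain lam ms"
proof -
  have "\<exists>!xs. max_chain_of xs bot top \<and> increasing_chain lam xs" using el unfolding EL_labeling_def by simp
  from theI'[OF this] show "max_chain_of ms bot top" "increasing_chain lam ms" unfolding ms_def by auto
qed

lemma ms_labels: "label_seq lam ms = [1..int n]"
  using sorted_distinct_set_unique[of "label_seq lam ms" "[1..int n]"] perm[OF ms(1)] ms(2)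
  unfolding increasing_chain_def by simp

lemma ms_len: "length ms = Suc n"
proof -
  have "length ms - 1 = n" using ms_labels ls_length[of lam ms] by simp
  moreover have "ms \<noteq> []" using ms(1) unfolding max_chain_of_def by simp
  then have "length ms > 0" by simp
  ultimately show ?thesis by linarith
qed

lemma ms0: "ms ! 0 = bot"
proof -
  have "ms \<noteq> []" "hd ms = bot" using ms(1) unfolding max_chain_of_def by auto
  then show ?thesis by (metis hd_conv_nth)
qed

lemma msn: "ms ! n = top"
proof -
  have "ms \<noteq> []" "last ms = top" using ms(1) unfolding max_chain_of_def by auto
  then have "ms ! (length ms - 1) = top" by (metis last_conv_nth)
  then show ?thesis using ms_len by simp
qed

lemma ms_cov: "i < n \<Longrightarrow> covers (ms ! i) (ms ! Suc i)"
  using ms(1) ms_len unfolding max_chain_of_def by simp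

lemma ms_lab: "i < n \<Longrightarrow> lam (ms ! i) (ms ! Suc i) = int i + 1"
proof -
  assume i: "i < n"
  have "Suc i < length ms" using i ms_len by simp
  then have "label_seq lam ms ! i = lam (ms ! i) (ms ! Suc i)" by (rule ls_nth)
  moreover have "[1..int n] ! i = 1 + int i" using nth_upto[of 1 i "int n"] i by simp
  ultimately show ?thesis using ms_labels by simp
qed

lemma S_ms: "i \<le> n \<Longrightarrow> S (ms ! i) = {1..int i}"
proof (induction i)
  case 0 then show ?case using ms0 S_bot by simp
next
  case (Suc i)
  then have i: "i < n" by simp
  have c: "max_chain_of [ms ! i, ms ! Suc i] (ms ! i) (ms ! Suc i)" using ms_cov[OF i] by (simp add: mc_Cons2)
  have "{lam (ms ! i) (ms ! Suc i)} = S (ms ! Suc i) - S (ms ! i)" "S (ms ! i) \<subseteq> S (ms ! Suc i)"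
    using CL[OF c] by auto
  then have "S (ms ! Suc i) = insert (int i + 1) {1..int i}" using Suc ms_lab[OF i] by auto
  also have "\<dots> = {1..int (Suc i)}" by auto
  finally show ?case .
qed

lemma ms_mono: assumes "i \<le> j" "j \<le> n" shows "ms ! i \<le> ms ! j"
proof -
  define f where "f k = ms ! min k n" for k
  have "\<And>k. f k \<le> f (Suc k)"
  proof -
    fix k show "f k \<le> f (Suc k)"
    proof (cases "k < n")
      case True
      then have "ms ! k < ms ! Suc k" using ms_cov covers_less by blast
      then show ?thesis using True unfolding f_def by simp
    next
      case False then show ?thesis unfolding f_def by simp
    qed
  qed
  then have "f i \<le> f j" using assms(1) by (rule lift_Suc_mono_le)
  then show ?thesis using assms unfolding f_def by simp
qed

lemma U: assumes i: "i \<le> n" and u: "S u = {1..int i}" shows "u = ms ! i"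
proof -
  obtain bs where bs: "max_chain_of bs bot u" "increasing_chain lam bs" using ex_inc[OF bot_least[of u]] by blast
  obtain cs where cs: "max_chain_of cs u top" "increasing_chain lam cs" using ex_inc[OF top_greatest[of u]] by blast
  have lb: "set (label_seq lam bs) = {1..int i}" using P1[OF bs(1)] u by simp
  have lc: "set (label_seq lam cs) = {1..int n} - {1..int i}" using CL(1)[OF cs(1)] u S_top by simp
  have ch: "max_chain_of (bs @ tl cs) bot top" using mc_append[OF bs(1) cs(1)] .
  have "sorted (label_seq lam bs @ label_seq lam cs)"
    using bs(2) cs(2) lb lc unfolding increasing_chain_def by (auto simp: sorted_append)
  then have "increasing_chain lam (bs @ tl cs)" using ls_append[OF bs(1) cs(1)] unfolding increasing_chain_def by simp
  then have e: "bs @ tl cs = ms" using uniq_inc[OF ch _ ms] by blast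
  have "u \<in> set bs" using bs(1) unfolding max_chain_of_def by (metis last_in_set)
  then have "u \<in> set (bs @ tl cs)" by simp
  then have "u \<in> set ms" using e by simp
  then obtain j where j: "j < length ms" "ms ! j = u" by (metis in_set_conv_nth)
  then have jn: "j \<le> n" using ms_len by simp
  then have eq: "{1..int j} = {1..int i}" using S_ms[OF jn] j(2) u by metis
  have "j = card {1..int j}" by simp
  also have "\<dots> = card {1..int i}" using eq by metis
  also have "\<dots> = i" by simp
  finally have "j = i" .
  then show ?thesis using j by simp
qed

lemma split_chain:
  "max_chain_of xs s t \<Longrightarrow> increasing_chain lam xs \<Longrightarrow> \<exists>z. s \<le> z \<and> z \<le> t \<and> S z = S s \<union> {l \<in> S t. l \<le> tau}"
proof (induction xs arbitrary: s rule: induct_list012)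
  case 1 then show ?case by simp
next
  case (2 x) then show ?case by (intro exI[of _ s]) auto
next
  case (3 x y zs)
  then have x: "x = s" "covers x y" and c: "max_chain_of (y # zs) y t" by (auto simp: mc_Cons2)
  have srt: "sorted (lam x y # label_seq lam (y # zs))" using 3(4) unfolding increasing_chain_def by simp
  then have inc: "increasing_chain lam (y # zs)" unfolding increasing_chain_def by simp
  have c2: "max_chain_of [x, y] x y" using x(2) by (simp add: mc_Cons2)
  have sy: "S y = insert (lam x y) (S x)" "lam x y \<notin> S x" using CL[OF c2] by auto
  have call: "set (label_seq lam (x # y # zs)) = S t - S s" using CL(1)[OF 3(3)] .
  have ain: "lam x y \<in> S t" using call by auto
  have sle: "s \<le> y" using x covers_less by (metis order.strict_implies_order)
  show ?case
  proof (cases "lam x y \<le> tau")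
    case True
    obtain z where z: "y \<le> z" "z \<le> t" "S z = S y \<union> {l \<in> S t. l \<le> tau}" using 3(2)[OF c inc] by blast
    have "S z = S s \<union> {l \<in> S t. l \<le> tau}" using z(3) sy x(1) ain True by auto
    moreover have "s \<le> z" using sle z(1) by (rule order.trans)
    ultimately show ?thesis using z(2) by blast
  next
    case False
    have "{l \<in> S t. l \<le> tau} \<subseteq> S s"
    proof
      fix l assume l: "l \<in> {l \<in> S t. l \<le> tau}"
      show "l \<in> S s"
      proof (rule ccontr)
        assume "l \<notin> S s"
        then have "l \<in> set (lam x y # label_seq lam (y # zs))" using call l by auto
        then have "lam x y \<le> l" using srt by auto
        moreover have "l \<le> tau" using l by simp
        ultimately show False using False by linarith
      qed
    qed
    then have "S s = S s \<union> {l \<in> S t. l \<le> tau}" by blast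
    then show ?thesis using mc_le[OF 3(3)] by blast
  qed
qed

lemma V: assumes i: "i \<le> n" and z: "{1..int i} \<subseteq> S z" shows "ms ! i \<le> z"
proof -
  obtain bs where bs: "max_chain_of bs bot z" "increasing_chain lam bs" using ex_inc[OF bot_least[of z]] by blast
  obtain u where u: "u \<le> z" "S u = S bot \<union> {l \<in> S z. l \<le> int i}"
    using split_chain[OF bs, of "int i"] by blast
  have "S u = {1..int i}" using u(2) S_bot z S_sub[of z] by auto
  then have "u = ms ! i" using U[OF i] by simp
  then show ?thesis using u(1) by simp
qed

lemma S3a: assumes i: "i \<le> n" shows "S (sup x (ms ! i)) = S x \<union> {1..int i}"
proof -
  let ?w = "sup x (ms ! i)"
  have xw: "x \<le> ?w" by simp
  obtain bs where bs: "max_chain_of bs x ?w" "increasing_chain lam bs" using ex_inc[OF xw] by blast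
  obtain z where z: "x \<le> z" "z \<le> ?w" "S z = S x \<union> {l \<in> S ?w. l \<le> int i}"
    using split_chain[OF bs, of "int i"] by blast
  have mi: "{1..int i} \<subseteq> S ?w" using S_mono[of "ms ! i" ?w] S_ms[OF i] by simp
  then have "{1..int i} \<subseteq> S z" using z(3) by auto
  then have "ms ! i \<le> z" using V[OF i] by simp
  then have "?w \<le> z" using z(1) by simp
  then have "z = ?w" using z(2) by (rule antisym[rotated])
  then have "S ?w = S x \<union> {l \<in> S ?w. l \<le> int i}" using z(3) by simp
  moreover have "{l \<in> S ?w. l \<le> int i} \<subseteq> {1..int i}" using S_sub[of ?w] by auto
  moreover have "S x \<subseteq> S ?w" using S_mono[OF xw] .
  ultimately show ?thesis using mi by blast
qed

lemma S3b: assumes i: "i \<le> n" shows "S (inf x (ms ! i)) = S x \<inter> {1..int i}"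
proof -
  obtain bs where bs: "max_chain_of bs bot x" "increasing_chain lam bs" using ex_inc[OF bot_least[of x]] by blast
  obtain z where z: "z \<le> x" "S z = S bot \<union> {l \<in> S x. l \<le> int i}"
    using split_chain[OF bs, of "int i"] by blast
  have Sz: "S z = S x \<inter> {1..int i}" using z(2) S_bot S_sub[of x] by auto
  have "S (sup z (ms ! i)) = {1..int i}" using S3a[OF i, of z] Sz by auto
  then have "sup z (ms ! i) = ms ! i" using S_eq[of "ms ! i" "sup z (ms ! i)"] S_ms[OF i] by simp
  then have zm: "z \<le> ms ! i" by (metis sup.cobounded1)
  let ?v = "inf x (ms ! i)"
  have zv: "z \<le> ?v" using z(1) zm by simp
  have "S ?v \<subseteq> S x \<inter> {1..int i}" using S_mono[of ?v x] S_mono[of ?v "ms ! i"] S_ms[OF i] by auto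
  then have "z = ?v" using S_eq[OF zv] Sz by simp
  then show ?thesis using Sz by simp
qed

end



context snel begin

lemma S3b': "k \<le> n \<Longrightarrow> S (inf (ms ! k) c) = S c \<inter> {1..int k}"
  using S3b[of k c] by (simp add: inf_commute)

lemma Jlem: assumes yc: "y \<le> c" and k: "k \<le> n"
  shows "S (sup y (inf (ms ! k) c)) = S y \<union> S (inf (ms ! k) c)"
proof
  show "S y \<union> S (inf (ms ! k) c) \<subseteq> S (sup y (inf (ms ! k) c))"
    using S_mono[OF sup_ge1[of y "inf (ms ! k) c"]] S_mono[OF sup_ge2[of "inf (ms ! k) c" y]] by blast
  have a1: "y \<le> inf (sup y (ms ! k)) c" using yc by simp
  have a2: "inf (ms ! k) c \<le> inf (sup y (ms ! k)) c" by (rule inf_mono) simp_all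
  have le: "sup y (inf (ms ! k) c) \<le> inf (sup y (ms ! k)) c" using a1 a2 by (rule sup_least)
  have "S (sup y (inf (ms ! k) c)) \<subseteq> S (inf (sup y (ms ! k)) c)" using S_mono[OF le] .
  also have "\<dots> \<subseteq> S (sup y (ms ! k)) \<inter> S c"
    using S_mono[OF inf_le1[of "sup y (ms ! k)" c]] S_mono[OF inf_le2[of "sup y (ms ! k)" c]] by blast
  also have "\<dots> = (S y \<union> {1..int k}) \<inter> S c" using S3a[OF k] by simp
  also have "\<dots> \<subseteq> S y \<union> S (inf (ms ! k) c)" using S3b'[OF k, of c] S_mono[OF yc] by blast
  finally show "S (sup y (inf (ms ! k) c)) \<subseteq> S y \<union> S (inf (ms ! k) c)" .
qed

definition Gs :: "'a set \<Rightarrow> 'a set" where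
  "Gs C = {inf (ms ! i) c | i c. i \<le> n \<and> c \<in> insert top C}"

definition J :: "'a set \<Rightarrow> 'a" where "J F = Sup_fin (insert bot F)"

lemma J_insert: "J (insert g F) = sup g (J F)"
proof -
  have "insert bot (insert g F) = insert g (insert bot F)" by blast
  then show ?thesis unfolding J_def using Sup_fin.insert[of "insert bot F" g] by simp
qed

lemma J_empty: "J {} = bot" unfolding J_def by simp

lemma J_single: "J {g} = g" using J_insert[of g "{}"] J_empty by simp

lemma J_upper: "g \<in> F \<Longrightarrow> g \<le> J F" unfolding J_def by (rule Sup_fin.coboundedI) auto

lemma J_least: "(\<And>g. g \<in> F \<Longrightarrow> g \<le> u) \<Longrightarrow> J F \<le> u"
  unfolding J_def by (rule Sup_fin.boundedI) auto

lemma J_union: "J (F1 \<union> F2) = sup (J F1) (J F2)"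
proof -
  have "insert bot (F1 \<union> F2) = insert bot F1 \<union> insert bot F2" by blast
  then show ?thesis unfolding J_def using Sup_fin.union[of "insert bot F1" "insert bot F2"] by simp
qed

lemma chain_top: "is_chain (C::'a set) \<Longrightarrow> is_chain (insert top C)"
  unfolding is_chain_def by auto

lemma K: assumes C: "is_chain C" shows "F \<subseteq> Gs C \<Longrightarrow> S (J F) = \<Union> (S ` F)"
proof (induction "card F" arbitrary: F rule: less_induct)
  case (less F)
  show ?case
  proof (cases "F = {}")
    case True then show ?thesis using J_empty S_bot by simp
  next
    case False
    let ?C' = "insert top C"
    have chC': "is_chain ?C'" using chain_top[OF C] .
    let ?R = "{c \<in> ?C'. \<exists>k \<le> n. inf (ms ! k) c \<in> F}"
    obtain g where "g \<in> F" using False by blast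
    then obtain i c where "i \<le> n" "c \<in> ?C'" "g = inf (ms ! i) c" using less.prems unfolding Gs_def by blast
    then have "c \<in> ?R" using \<open>g \<in> F\<close> by blast
    then have Rne: "?R \<noteq> {}" by blast
    have "finite ?R" by simp
    then obtain c0 where c0: "c0 \<in> ?R" "\<forall>b\<in>?R. c0 \<le> b \<longrightarrow> c0 = b"
      using finite_has_maximal[OF _ Rne] by blast
    have c0max: "\<forall>b\<in>?R. b \<le> c0"
    proof
      fix b assume b: "b \<in> ?R"
      then have "b \<le> c0 \<or> c0 \<le> b" using chC' c0(1) unfolding is_chain_def by blast
      then show "b \<le> c0" using c0(2) b by auto
    qed
    obtain k0 where k0: "k0 \<le> n" "inf (ms ! k0) c0 \<in> F" using c0(1) by blast
    define g0 where "g0 = inf (ms ! k0) c0"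
    define F' where "F' = F - {g0}"
    have Fle: "\<forall>g\<in>F. g \<le> c0"
    proof
      fix g assume g: "g \<in> F"
      then obtain i c where ic: "i \<le> n" "c \<in> ?C'" "g = inf (ms ! i) c" using less.prems unfolding Gs_def by blast
      then have "c \<in> ?R" using g by blast
      then have "c \<le> c0" using c0max by blast
      then show "g \<le> c0" using ic(3) by (simp add: le_infI2)
    qed
    have JF'le: "J F' \<le> c0" using Fle unfolding F'_def by (intro J_least) auto
    have g0F: "g0 \<in> F" using k0(2) g0_def by simp
    have card: "card F' < card F" unfolding F'_def by (rule card_Diff1_less[OF _ g0F]) simp
    have F'sub: "F' \<subseteq> Gs C" using less.prems unfolding F'_def by blast
    have IH: "S (J F') = \<Union> (S ` F')" using less.hyps[OF card F'sub] .
    have Fins: "F = insert g0 F'" using k0(2) unfolding F'_def g0_def by blast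
    have JF: "J F = sup (J F') g0" using J_insert[of g0 F'] Fins by (simp add: sup_commute)
    have "S (J F) = S (J F') \<union> S g0" using JF Jlem[OF JF'le k0(1)] unfolding g0_def by simp
    also have "\<dots> = \<Union> (S ` F)" using IH Fins by auto
    finally show ?thesis .
  qed
qed

lemma Meet: assumes C: "is_chain C" and F1: "F1 \<subseteq> Gs C" and F2: "F2 \<subseteq> Gs C"
  shows "inf (J F1) (J F2) = J {g \<in> Gs C. g \<le> inf (J F1) (J F2)}"
    "S (inf (J F1) (J F2)) = S (J F1) \<inter> S (J F2)"
proof -
  let ?u = "inf (J F1) (J F2)"
  let ?F3 = "{g \<in> Gs C. g \<le> ?u}"
  have F3: "?F3 \<subseteq> Gs C" by blast
  have J3: "J ?F3 \<le> ?u" by (rule J_least) blast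
  have su: "S ?u \<subseteq> S (J F1) \<inter> S (J F2)"
    using S_mono[OF inf_le1[of "J F1" "J F2"]] S_mono[OF inf_le2[of "J F1" "J F2"]] by blast
  have key: "S (J F1) \<inter> S (J F2) \<subseteq> S (J ?F3)"
  proof
    fix l assume l: "l \<in> S (J F1) \<inter> S (J F2)"
    obtain g1 where g1: "g1 \<in> F1" "l \<in> S g1" using l K[OF C F1] by auto
    obtain g2 where g2: "g2 \<in> F2" "l \<in> S g2" using l K[OF C F2] by auto
    obtain i1 c1 where ic1: "i1 \<le> n" "c1 \<in> insert top C" "g1 = inf (ms ! i1) c1" using g1 F1 unfolding Gs_def by blast
    obtain i2 c2 where ic2: "i2 \<le> n" "c2 \<in> insert top C" "g2 = inf (ms ! i2) c2" using g2 F2 unfolding Gs_def by blast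
    have cmp: "c1 \<le> c2 \<or> c2 \<le> c1" using chain_top[OF C] ic1(2) ic2(2) unfolding is_chain_def by blast
    define i where "i = min i1 i2"
    define c where "c = inf c1 c2"
    have cC: "c \<in> insert top C" using cmp ic1(2) ic2(2) unfolding c_def by (auto simp: inf_absorb1 inf_absorb2)
    have iN: "i \<le> n" using ic1(1) unfolding i_def by simp
    define g where "g = inf (ms ! i) c"
    have gG: "g \<in> Gs C" unfolding Gs_def g_def using iN cC by blast
    have m1: "ms ! i \<le> ms ! i1" using ms_mono[of i i1] ic1(1) unfolding i_def by simp
    have m2: "ms ! i \<le> ms ! i2" using ms_mono[of i i2] ic2(1) unfolding i_def by simp
    have "g \<le> g1" unfolding g_def ic1(3) c_def using m1 by (intro inf_mono) simp_all
    then have gJ1: "g \<le> J F1" using J_upper[OF g1(1)] by (rule order.trans)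
    have "g \<le> g2" unfolding g_def ic2(3) c_def using m2 by (intro inf_mono) simp_all
    then have gJ2: "g \<le> J F2" using J_upper[OF g2(1)] by (rule order.trans)
    have g3: "g \<in> ?F3" using gG gJ1 gJ2 by simp
    have l1: "l \<in> S c1" "l \<le> int i1" using g1(2) S3b'[OF ic1(1), of c1] ic1(3) by auto
    have l2: "l \<in> S c2" "l \<le> int i2" using g2(2) S3b'[OF ic2(1), of c2] ic2(3) by auto
    have "l \<ge> 1" using l1(1) S_sub[of c1] by auto
    moreover have "l \<in> S c" using cmp l1(1) l2(1) unfolding c_def by (auto simp: inf_absorb1 inf_absorb2)
    moreover have "l \<le> int i" using l1(2) l2(2) unfolding i_def by simp
    ultimately have "l \<in> S g" unfolding g_def using S3b'[OF iN, of c] by simp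
    then have "l \<in> \<Union> (S ` ?F3)" using g3 by blast
    then show "l \<in> S (J ?F3)" using K[OF C F3] by simp
  qed
  have "J ?F3 = ?u" using S_eq[OF J3] su key by blast
  then show "?u = J ?F3" by simp
  show "S ?u = S (J F1) \<inter> S (J F2)" using su key \<open>J ?F3 = ?u\<close> by auto
qed

definition DD :: "'a set \<Rightarrow> 'a set" where "DD C = {J F | F. F \<subseteq> Gs C}"

lemma DD_I: "F \<subseteq> Gs C \<Longrightarrow> J F \<in> DD C" unfolding DD_def by blast

lemma DD_sup: assumes C: "is_chain C" and a: "a \<in> DD C" and b: "b \<in> DD C"
  shows "sup a b \<in> DD C" "S (sup a b) = S a \<union> S b"
proof -
  obtain F1 where F1: "F1 \<subseteq> Gs C" "a = J F1" using a unfolding DD_def by blast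
  obtain F2 where F2: "F2 \<subseteq> Gs C" "b = J F2" using b unfolding DD_def by blast
  have e: "sup a b = J (F1 \<union> F2)" using F1 F2 J_union by simp
  have s: "F1 \<union> F2 \<subseteq> Gs C" using F1 F2 by blast
  show "sup a b \<in> DD C" using e DD_I[OF s] by simp
  show "S (sup a b) = S a \<union> S b" using e K[OF C s] K[OF C F1(1)] K[OF C F2(1)] F1 F2 by auto
qed

lemma DD_inf: assumes C: "is_chain C" and a: "a \<in> DD C" and b: "b \<in> DD C"
  shows "inf a b \<in> DD C" "S (inf a b) = S a \<inter> S b"
proof -
  obtain F1 where F1: "F1 \<subseteq> Gs C" "a = J F1" using a unfolding DD_def by blast
  obtain F2 where F2: "F2 \<subseteq> Gs C" "b = J F2" using b unfolding DD_def by blast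
  note m = Meet[OF C F1(1) F2(1)]
  have "{g \<in> Gs C. g \<le> inf (J F1) (J F2)} \<subseteq> Gs C" by blast
  then show "inf a b \<in> DD C" using m(1) F1 F2 DD_I by metis
  show "S (inf a b) = S a \<inter> S b" using m(2) F1 F2 by simp
qed

lemma DD_inj: assumes C: "is_chain C" and a: "a \<in> DD C" and b: "b \<in> DD C" and e: "S a = S b"
  shows "a = b"
proof -
  have s: "S (inf a b) = S a" using DD_inf(2)[OF C a b] e by simp
  have "inf a b = a" using S_eq[OF inf_le1[of a b]] s by simp
  moreover have "inf a b = b" using S_eq[OF inf_le2[of a b]] s e by simp
  ultimately show ?thesis by simp
qed

lemma DD_dist: assumes C: "is_chain C" and a: "a \<in> DD C" and b: "b \<in> DD C" and c: "c \<in> DD C"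
  shows "inf a (sup b c) = sup (inf a b) (inf a c)"
proof (rule DD_inj[OF C])
  have bc: "sup b c \<in> DD C" using DD_sup[OF C b c] by simp
  have ab: "inf a b \<in> DD C" and ac: "inf a c \<in> DD C" using DD_inf[OF C a b] DD_inf[OF C a c] by auto
  show "inf a (sup b c) \<in> DD C" using DD_inf[OF C a bc] by simp
  show "sup (inf a b) (inf a c) \<in> DD C" using DD_sup[OF C ab ac] by simp
  have "S (inf a (sup b c)) = S a \<inter> (S b \<union> S c)" using DD_inf(2)[OF C a bc] DD_sup(2)[OF C b c] by simp
  also have "\<dots> = (S a \<inter> S b) \<union> (S a \<inter> S c)" by blast
  also have "\<dots> = S (sup (inf a b) (inf a c))"
    using DD_sup(2)[OF C ab ac] DD_inf(2)[OF C a b] DD_inf(2)[OF C a c] by simp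
  finally show "S (inf a (sup b c)) = S (sup (inf a b) (inf a c))" .
qed

lemma DD_base: assumes C: "is_chain C" shows "set ms \<union> C \<subseteq> DD C"
proof
  fix x assume x: "x \<in> set ms \<union> C"
  show "x \<in> DD C"
  proof (cases "x \<in> set ms")
    case True
    then obtain i where i: "i < length ms" "ms ! i = x" by (metis in_set_conv_nth)
    then have iN: "i \<le> n" using ms_len by simp
    have "inf (ms ! i) top \<in> Gs C" unfolding Gs_def using iN by blast
    then have "{x} \<subseteq> Gs C" using i by simp
    then show ?thesis using DD_I[of "{x}" C] J_single[of x] by simp
  next
    case False
    then have xC: "x \<in> C" using x by blast
    have "inf (ms ! n) x \<in> Gs C" unfolding Gs_def using xC by blast
    then have "{x} \<subseteq> Gs C" using msn by simp
    then show ?thesis using DD_I[of "{x}" C] J_single[of x] by simp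
  qed
qed

lemma gen_DD: assumes C: "is_chain C" shows "y \<in> gen_sublattice (set ms \<union> C) \<Longrightarrow> y \<in> DD C"
proof (induction rule: gen_sublattice.induct)
  case (base x) then show ?case using DD_base[OF C] by blast
next
  case (meet x y) then show ?case using DD_inf(1)[OF C] by blast
next
  case (join x y) then show ?case using DD_sup(1)[OF C] by blast
qed

lemma dist_gen: "is_chain C \<Longrightarrow> distributive_on (gen_sublattice (set ms \<union> C))"
  unfolding distributive_on_def using gen_DD DD_dist by blast

lemma ms_chain: "is_maximal_chain (set ms)"
  unfolding is_maximal_chain_def
proof (intro conjI allI impI)
  show ch: "is_chain (set ms)" unfolding is_chain_def
  proof (intro ballI)
    fix x y assume "x \<in> set ms" "y \<in> set ms"
    then obtain i j where "i < length ms" "ms ! i = x" "j < length ms" "ms ! j = y" by (metis in_set_conv_nth)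
    then show "x \<le> y \<or> y \<le> x" using ms_mono[of i j] ms_mono[of j i] ms_len by (metis le_cases less_Suc_eq_le)
  qed
  fix C assume a: "is_chain C \<and> set ms \<subseteq> C"
  show "C = set ms"
  proof
    show "set ms \<subseteq> C" using a by blast
    show "C \<subseteq> set ms"
    proof
      fix x assume xC: "x \<in> C"
      have comp: "\<And>i. i \<le> n \<Longrightarrow> ms ! i \<le> x \<or> x \<le> ms ! i"
      proof -
        fix i assume "i \<le> n"
        then have "ms ! i \<in> C" using a ms_len by (metis in_mono le_imp_less_Suc nth_mem)
        then show "ms ! i \<le> x \<or> x \<le> ms ! i" using a xC unfolding is_chain_def by blast
      qed
      let ?I = "{i. i \<le> n \<and> ms ! i \<le> x}"
      have fin: "finite ?I" by simp
      have "0 \<in> ?I" using ms0 by simp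
      then have Ine: "?I \<noteq> {}" by blast
      define i where "i = Max ?I"
      have iI: "i \<in> ?I" unfolding i_def using Max_in[OF fin Ine] .
      have imax: "\<And>j. j \<in> ?I \<Longrightarrow> j \<le> i" unfolding i_def using Max_ge[OF fin] by blast
      show "x \<in> set ms"
      proof (cases "i = n")
        case True
        then have "top \<le> x" using iI msn by simp
        then have "x = ms ! n" using msn top_unique by metis
        then show ?thesis using ms_len by (metis lessI nth_mem)
      next
        case False
        then have sn: "Suc i \<le> n" using iI by simp
        have "Suc i \<notin> ?I" using imax by fastforce
        then have "\<not> ms ! Suc i \<le> x" using sn by simp
        then have "x \<le> ms ! Suc i" using comp[OF sn] by blast
        then have xl: "x < ms ! Suc i" using \<open>\<not> ms ! Suc i \<le> x\<close> by (metis order.not_eq_order_implies_strict)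
        have ix: "ms ! i \<le> x" using iI by simp
        have "covers (ms ! i) (ms ! Suc i)" using ms_cov sn by simp
        then have "\<not> (ms ! i < x)" using xl unfolding covers_def by blast
        then have "x = ms ! i" using ix by (metis order.not_eq_order_implies_strict)
        then show ?thesis using iI ms_len by (metis le_imp_less_Suc mem_Collect_eq nth_mem)
      qed
    qed
  qed
qed

theorem ss: "supersolvable TYPE('a)"
  unfolding supersolvable_def M_chain_def using ms_chain dist_gen by blast

end



theorem mainTheorem1:
  fixes n :: nat
  assumes "graded_of_rank n TYPE('a::{finite, bounded_lattice})"
  shows "supersolvable TYPE('a) \<longleftrightarrow> (\<exists>lam :: 'a \<Rightarrow> 'a \<Rightarrow> int. Sn_EL_labeling n lam)"
proof
  assume "supersolvable TYPE('a)"
  then obtain M :: "'a set" where "M_chain M" unfolding supersolvable_def by blast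
  then show "\<exists>lam :: 'a \<Rightarrow> 'a \<Rightarrow> int. Sn_EL_labeling n lam" using forward[OF assms] by blast
next
  assume "\<exists>lam :: 'a \<Rightarrow> 'a \<Rightarrow> int. Sn_EL_labeling n lam"
  then obtain lam :: "'a \<Rightarrow> 'a \<Rightarrow> int" where "Sn_EL_labeling n lam" by blast
  then have "snel lam n" by (rule snel.intro)
  then show "supersolvable TYPE('a)" by (rule snel.ss)
qed

end
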